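(* Let $W_2\in\{M_2,S_2\}$ and let $\phi:W_2\to W_2$ be a linear map with $\sigma_{\mathcal{K}}(\phi(A))=\sigma_{\mathcal{K}}(A)$ for all $A\in W_2$. Then $\operatorname{tr}(\phi(A))=\operatorname{tr}(A)$ for all $A\in W_2$, and either $\operatorname{antitr}(\phi(A))=\operatorname{antitr}(A)$ for all $A\in W_2$, or $\operatorname{antitr}(\phi(A))=-\operatorname{antitr}(A)$ for all $A\in W_2$.
   Context: $M_2$: real $2\times2$ matrices; $S_2$: symmetric ones. For $A=\begin{bmatrix}a&b\\c&d\end{bmatrix}$, $\operatorname{tr}(A)=a+d$ and the anti-trace is $\operatorname{antitr}(A)=b+c$. Lorentz cone $\mathcal{K}=\{(x_1,x_2)^T:|x_1|\le x_2\}$; a real $\lambda$ is an L-eigenvalue of $A$ if there is a nonzero $x\in\mathcal{K}$ with $(A-\lambda I)x\in\mathcal{K}$ and $x^T(A-\lambda I)x=0$; $\sigma_{\mathcal{K}}(A)$ is the set of L-eigenvalues. *)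

theory Defs
  imports "HOL-Analysis.Analysis"
begin

type_synonym mat2 = "real^2^2"

definition tr2 :: "mat2 \<Rightarrow> real" where
  "tr2 A = A$1$1 + A$2$2"

definition antitr2 :: "mat2 \<Rightarrow> real" where
  "antitr2 A = A$1$2 + A$2$1"

definition lorentz2 :: "(real^2) set" where
  "lorentz2 = {x. \<bar>x$1\<bar> \<le> x$2}"

definition L_eigenvalue :: "mat2 \<Rightarrow> real \<Rightarrow> bool" where
  "L_eigenvalue A l \<longleftrightarrow>
     (\<exists>x. x \<noteq> 0 \<and> x \<in> lorentz2 \<and> (A - l *\<^sub>R mat 1) *v x \<in> lorentz2
          \<and> x \<bullet> ((A - l *\<^sub>R mat 1) *v x) = 0)"

definition L_spectrum :: "mat2 \<Rightarrow> real set" where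
  "L_spectrum A = {l. L_eigenvalue A l}"

definition sym_mats2 :: "mat2 set" where
  "sym_mats2 = {A. transpose A = A}"

end

theory Submission
  imports Defs
begin

definition al :: "mat2 \<Rightarrow> real" where "al A = (A$1$1 + A$1$2 + A$2$1 + A$2$2)/2"
definition de :: "mat2 \<Rightarrow> real" where "de A = (A$1$1 - A$1$2 - A$2$1 + A$2$2)/2"
definition ga :: "mat2 \<Rightarrow> real" where "ga A = (- A$1$1 - A$1$2 + A$2$1 + A$2$2)/2"
definition be :: "mat2 \<Rightarrow> real" where "be A = (- A$1$1 + A$1$2 - A$2$1 + A$2$2)/2"
definition eig :: "mat2 \<Rightarrow> real \<Rightarrow> bool" where
  "eig A l \<longleftrightarrow> (\<exists>s t. s > 0 \<and> t > 0 \<and> (al A - l) * s + be A * t = 0 \<and> ga A * s + (de A - l) * t = 0)"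

lemma mv2: "((A::mat2) *v x) $ 1 = A$1$1 * x$1 + A$1$2 * x$2"
           "((A::mat2) *v x) $ 2 = A$2$1 * x$1 + A$2$2 * x$2"
  by (simp_all add: matrix_vector_mult_def sum_2)

lemma inner2: "(x::real^2) \<bullet> y = x$1 * y$1 + x$2 * y$2"
  by (simp add: inner_vec_def sum_2)

lemma sub_comp: "(A - l *\<^sub>R mat 1 :: mat2) $ i $ j = A $ i $ j - (if i = j then l else 0)"
  by (simp add: mat_def)

lemma mat1: "(mat 1 :: mat2)$1$1 = 1" "(mat 1 :: mat2)$2$2 = 1" "(mat 1 :: mat2)$1$2 = 0" "(mat 1 :: mat2)$2$1 = 0"
  by (simp_all add: mat_def)

lemma L1:
  assumes "L_eigenvalue A l"
  shows "(l = al A \<and> ga A \<ge> 0) \<or> (l = de A \<and> be A \<ge> 0) \<or> eig A l"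
proof -
  obtain x where x0: "x \<noteq> 0" and xK: "x \<in> lorentz2" and yK: "(A - l *\<^sub>R mat 1) *v x \<in> lorentz2"
    and xy: "x \<bullet> ((A - l *\<^sub>R mat 1) *v x) = 0"
    using assms unfolding L_eigenvalue_def by blast
  define y where "y = (A - l *\<^sub>R mat 1) *v x"
  have y1: "y$1 = (A$1$1 - l) * x$1 + A$1$2 * x$2" and y2: "y$2 = A$2$1 * x$1 + (A$2$2 - l) * x$2"
    unfolding y_def mv2 sub_comp by (auto simp: algebra_simps)
  define s where "s = (x$1 + x$2)/2"
  define t where "t = (x$2 - x$1)/2"
  define p where "p = (al A - l) * s + be A * t"
  define q where "q = ga A * s + (de A - l) * t"
  have x1: "x$1 = s - t" and x2: "x$2 = s + t" unfolding s_def t_def by (simp_all add: field_simps)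
  have pq1: "y$1 = p - q" and pq2: "y$2 = p + q"
    unfolding y1 y2 p_def q_def x1 x2 al_def be_def ga_def de_def by (auto simp: field_simps)
  have st: "s \<ge> 0" "t \<ge> 0" using xK unfolding lorentz2_def s_def t_def by auto
  have pq: "p \<ge> 0" "q \<ge> 0" using yK pq1 pq2 unfolding lorentz2_def y_def[symmetric] by (auto simp: abs_le_iff)
  have "x$1 * y$1 + x$2 * y$2 = 0" using xy unfolding y_def[symmetric] inner2 .
  hence "2 * (s * p + t * q) = 0" unfolding x1 x2 pq1 pq2 by (simp add: algebra_simps)
  hence sp: "s * p = 0" and tq: "t * q = 0" using st pq
    by (smt (verit) mult_nonneg_nonneg)+
  have nz: "s \<noteq> 0 \<or> t \<noteq> 0"
  proof (rule ccontr)
    assume "\<not> ?thesis"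
    hence "x$1 = 0" "x$2 = 0" using x1 x2 by auto
    hence "x = 0" by (simp add: vec_eq_iff forall_2)
    thus False using x0 by simp
  qed
  show ?thesis
  proof (cases "s > 0")
    case True
    hence p0: "p = 0" using sp by simp
    show ?thesis
    proof (cases "t > 0")
      case True
      hence "q = 0" using tq by simp
      thus ?thesis using p0 `s > 0` True unfolding eig_def p_def q_def by blast
    next
      case False
      hence t0: "t = 0" using st by simp
      hence "l = al A" using p0 `s > 0` unfolding p_def by simp
      moreover have "ga A \<ge> 0" using pq `s > 0` t0 unfolding q_def
        by (simp add: zero_le_mult_iff)
      ultimately show ?thesis by blast
    qed
  next
    case False
    hence s0: "s = 0" using st by simp
    hence t: "t > 0" using nz st by auto
    hence "q = 0" using tq by simp
    hence "l = de A" using t s0 unfolding q_def by simp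
    moreover have "be A \<ge> 0" using pq t s0 unfolding p_def
      by (simp add: zero_le_mult_iff)
    ultimately show ?thesis by blast
  qed
qed

lemma L2a:
  assumes "ga A \<ge> 0" shows "L_eigenvalue A (al A)"
proof -
  define x :: "real^2" where "x = vector [1, 1]"
  have "x \<noteq> 0" unfolding x_def by (simp add: vec_eq_iff forall_2)
  moreover have "x \<in> lorentz2" unfolding x_def lorentz2_def by simp
  moreover have "(A - al A *\<^sub>R mat 1) *v x \<in> lorentz2"
    using assms by (simp add: x_def lorentz2_def mv2 sub_comp mat1 al_def ga_def abs_le_iff field_simps)
  moreover have "x \<bullet> ((A - al A *\<^sub>R mat 1) *v x) = 0"
    unfolding x_def inner2 mv2 sub_comp al_def by (simp add: algebra_simps)
  ultimately show ?thesis unfolding L_eigenvalue_def by blast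
qed

lemma L2b:
  assumes "be A \<ge> 0" shows "L_eigenvalue A (de A)"
proof -
  define x :: "real^2" where "x = vector [-1, 1]"
  have "x \<noteq> 0" unfolding x_def by (simp add: vec_eq_iff forall_2)
  moreover have "x \<in> lorentz2" unfolding x_def lorentz2_def by simp
  moreover have "(A - de A *\<^sub>R mat 1) *v x \<in> lorentz2"
    using assms by (simp add: x_def lorentz2_def mv2 sub_comp mat1 de_def be_def abs_le_iff field_simps)
  moreover have "x \<bullet> ((A - de A *\<^sub>R mat 1) *v x) = 0"
    unfolding x_def inner2 mv2 sub_comp de_def by (simp add: algebra_simps)
  ultimately show ?thesis unfolding L_eigenvalue_def by blast
qed


lemma alS[simp]: "al (A + B) = al A + al B" "al (c *\<^sub>R A) = c * al A" "al (- A) = - al A"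
  by (auto simp: al_def field_simps)
lemma deS[simp]: "de (A + B) = de A + de B" "de (c *\<^sub>R A) = c * de A" "de (- A) = - de A"
  by (auto simp: de_def field_simps)
lemma beS[simp]: "be (A + B) = be A + be B" "be (c *\<^sub>R A) = c * be A" "be (- A) = - be A"
  by (auto simp: be_def field_simps)
lemma gaS[simp]: "ga (A + B) = ga A + ga B" "ga (c *\<^sub>R A) = c * ga A" "ga (- A) = - ga A"
  by (auto simp: ga_def field_simps)

lemma L1neg:
  assumes "L_eigenvalue ((-1) *\<^sub>R A) (-l)"
  shows "l = al A \<or> l = de A \<or> eig A l"
proof -
  from L1[OF assms] consider "-l = - al A" | "-l = - de A" | "eig ((-1) *\<^sub>R A) (-l)" by auto
  thus ?thesis
  proof cases
    case 3
    then obtain s t where "s > 0" "t > 0" "(- al A + l) * s + (- be A) * t = 0" "(- ga A) * s + (- de A + l) * t = 0"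
      unfolding eig_def by auto
    hence "eig A l" unfolding eig_def
      by (rule_tac x=s in exI, rule_tac x=t in exI) (auto simp: algebra_simps)
    thus ?thesis by blast
  qed auto
qed

definition "E1 = (vector [vector [1/2, 1/2], vector [1/2, 1/2]] :: mat2)"
definition "E2 = (vector [vector [1/2, -1/2], vector [-1/2, 1/2]] :: mat2)"
definition "G = (vector [vector [-1, 0], vector [0, 1]] :: mat2)"
definition "H = (vector [vector [0, 1], vector [-1, 0]] :: mat2)"

lemma vals[simp]:
  "al E1 = 1" "de E1 = 0" "be E1 = 0" "ga E1 = 0"
  "al E2 = 0" "de E2 = 1" "be E2 = 0" "ga E2 = 0"
  "al G = 0" "de G = 0" "be G = 1" "ga G = 1"
  "al H = 0" "de H = 0" "be H = 1" "ga H = -1"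
  by (simp_all add: E1_def E2_def G_def H_def al_def de_def be_def ga_def)

lemma sym_iff: "A \<in> sym_mats2 \<longleftrightarrow> A$1$2 = A$2$1"
  unfolding sym_mats2_def by (auto simp: vec_eq_iff forall_2 transpose_def)

lemma sym_in[simp]: "E1 \<in> sym_mats2" "E2 \<in> sym_mats2" "G \<in> sym_mats2"
  by (simp_all add: sym_iff E1_def E2_def G_def)

lemma decomp: "A = al A *\<^sub>R E1 + de A *\<^sub>R E2 + ((be A + ga A)/2) *\<^sub>R G + ((be A - ga A)/2) *\<^sub>R H"
  by (simp add: vec_eq_iff forall_2 E1_def E2_def G_def H_def al_def de_def be_def ga_def field_simps)

lemma decomp_sym: "A \<in> sym_mats2 \<Longrightarrow> A = al A *\<^sub>R E1 + de A *\<^sub>R E2 + be A *\<^sub>R G"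
  by (simp add: sym_iff vec_eq_iff forall_2 E1_def E2_def G_def al_def de_def be_def field_simps)

definition "P A l \<longleftrightarrow> l = al A \<or> l = de A \<or> eig A l"

lemma functional_form:
  fixes f :: "mat2 \<Rightarrow> real"
  assumes W: "W = UNIV \<or> W = sym_mats2"
    and add: "\<And>A B. A \<in> W \<Longrightarrow> B \<in> W \<Longrightarrow> f (A + B) = f A + f B"
    and sc: "\<And>A c. A \<in> W \<Longrightarrow> f (c *\<^sub>R A) = c * f A"
    and key: "\<And>A. A \<in> W \<Longrightarrow> P A (f A)"
  shows "\<exists>a. (a = 0 \<or> a = 1) \<and> (\<forall>A\<in>W. f A = a * al A + (1 - a) * de A)"
proof -
  have cl: "A \<in> W \<Longrightarrow> B \<in> W \<Longrightarrow> A + B \<in> W" "A \<in> W \<Longrightarrow> c *\<^sub>R A \<in> W" for A B c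
    using W by (auto simp: sym_iff)
  have inW: "E1 \<in> W" "E2 \<in> W" "G \<in> W" using W by auto
  define a where "a = f E1"
  define d where "d = f E2"
  define b where "b = f G"
  have a01: "a = 0 \<or> a = 1"
  proof -
    have "P E1 a" using key[OF inW(1)] a_def by simp
    thus ?thesis unfolding P_def eig_def by auto
  qed
  have ad: "a + d = 1"
  proof -
    have "P (E1 + E2) (a + d)" using key[OF cl(1)[OF inW(1,2)]] add[OF inW(1,2)] a_def d_def by simp
    thus ?thesis unfolding P_def eig_def by auto
  qed
  have b01: "b = 0 \<or> b = 1"
  proof -
    have "P G b" using key[OF inW(3)] b_def by simp
    hence "b = 0 \<or> eig G b" unfolding P_def by auto
    thus ?thesis
    proof
      assume "b = 0" thus ?thesis by simp
    next
      assume "eig G b"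
      then obtain s t where st: "s > 0" "t > 0" "(0 - b) * s + t = 0" "s + (0 - b) * t = 0"
        unfolding eig_def by auto
      hence "t = b * s" by (simp add: algebra_simps)
      hence "s * (1 - b * b) = 0" using st by (simp add: algebra_simps)
      hence "b * b = 1" using st by simp
      moreover have "b > 0" using st `t = b * s` by (simp add: zero_less_mult_iff)
      ultimately show ?thesis by (metis abs_of_pos mult_cancel_left1 power2_eq_square real_sqrt_abs real_sqrt_one zero_le_one)
    qed
  qed
  have b0: "b = 0"
  proof -
    have X: "3 *\<^sub>R E1 + 2 *\<^sub>R G \<in> W" using cl inW by blast
    have fX: "f (3 *\<^sub>R E1 + 2 *\<^sub>R G) = 3 * a + 2 * b"
      using add[OF cl(2)[OF inW(1)] cl(2)[OF inW(3)]] sc inW a_def b_def by simp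
    have "P (3 *\<^sub>R E1 + 2 *\<^sub>R G) (3 * a + 2 * b)" using key[OF X] fX by simp
    hence "3 * a + 2 * b = 3 \<or> 3 * a + 2 * b = 0 \<or> (\<exists>s t. s > 0 \<and> t > 0 \<and> (3 - (3 * a + 2 * b)) * s + 2 * t = 0 \<and> 2 * s + (0 - (3 * a + 2 * b)) * t = 0)"
      unfolding P_def eig_def by simp
    thus ?thesis using a01 b01 by auto
  qed
  have lin: "f A = a * al A + d * de A" if A: "A \<in> W" for A
  proof (cases "W = UNIV")
    case True
    have h0: "f H = 0"
    proof -
      have "P H (f H)" using key True by simp
      hence "f H = 0 \<or> eig H (f H)" unfolding P_def by auto
      thus ?thesis
      proof
        assume "f H = 0" thus ?thesis by simp
      next
        assume "eig H (f H)"
        then obtain s t where st: "s > 0" "t > 0" "(0 - f H) * s + t = 0" "- s + (0 - f H) * t = 0"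
          unfolding eig_def by auto
        hence "t = f H * s" by (simp add: algebra_simps)
        hence "s * (1 + f H * f H) = 0" using st by (simp add: algebra_simps)
        moreover have "1 + f H * f H > 0" by (smt (verit) zero_le_square)
        ultimately show ?thesis using st by simp
      qed
    qed
    have "f A = f (al A *\<^sub>R E1 + de A *\<^sub>R E2 + ((be A + ga A)/2) *\<^sub>R G + ((be A - ga A)/2) *\<^sub>R H)"
      using decomp by metis
    also have "\<dots> = a * al A + d * de A + ((be A + ga A)/2) * b + ((be A - ga A)/2) * f H"
      using True add sc a_def d_def b_def by simp
    finally show ?thesis using b0 h0 by simp
  next
    case False
    hence S: "A \<in> sym_mats2" using W A by auto
    have "f A = f (al A *\<^sub>R E1 + de A *\<^sub>R E2 + be A *\<^sub>R G)"
      using decomp_sym[OF S] by metis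
    also have "\<dots> = a * al A + d * de A + be A * b"
      using add sc a_def d_def b_def cl inW by simp
    finally show ?thesis using b0 by simp
  qed
  show ?thesis using a01 ad lin by (rule_tac x=a in exI) (auto simp: algebra_simps)
qed

lemma excl:
  assumes "al B = 1" "de B = 1" "L_eigenvalue B 0" "L_eigenvalue B 1"
  shows False
proof -
  from L1[OF assms(3)] assms(1,2) have "eig B 0" by auto
  then obtain s t where st: "s > 0" "t > 0" "s + be B * t = 0" "ga B * s + t = 0"
    unfolding eig_def using assms by auto
  have "be B < 0" using st by (smt (verit) mult_nonneg_nonneg)
  moreover have "ga B < 0" using st by (smt (verit) mult_nonneg_nonneg)
  moreover from L1[OF assms(4)] assms(1,2) have "ga B \<ge> 0 \<or> be B \<ge> 0 \<or> eig B 1" by auto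
  ultimately have "eig B 1" by auto
  then obtain s t where "t > 0" "be B * t = 0" unfolding eig_def using assms by auto
  thus False using `be B < 0` by simp
qed


lemma tr_al: "tr2 A = al A + de A" unfolding tr2_def al_def de_def by (simp add: field_simps)
lemma antitr_al: "antitr2 A = al A - de A" unfolding antitr2_def al_def de_def by (simp add: field_simps)

theorem corollary4p4:
  fixes W :: "mat2 set" and \<phi> :: "mat2 \<Rightarrow> mat2"
  assumes W: "W = UNIV \<or> W = sym_mats2"
    and maps: "\<forall>A\<in>W. \<phi> A \<in> W"
    and add: "\<forall>A\<in>W. \<forall>B\<in>W. \<phi> (A + B) = \<phi> A + \<phi> B"
    and scale: "\<forall>A\<in>W. \<forall>c::real. \<phi> (c *\<^sub>R A) = c *\<^sub>R \<phi> A"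
    and pres: "\<forall>A\<in>W. L_spectrum (\<phi> A) = L_spectrum A"
  shows "(\<forall>A\<in>W. tr2 (\<phi> A) = tr2 A) \<and>
         ((\<forall>A\<in>W. antitr2 (\<phi> A) = antitr2 A) \<or> (\<forall>A\<in>W. antitr2 (\<phi> A) = - antitr2 A))"
proof -
  have cl: "A \<in> W \<Longrightarrow> B \<in> W \<Longrightarrow> A + B \<in> W" "A \<in> W \<Longrightarrow> c *\<^sub>R A \<in> W" for A B c
    using W by (auto simp: sym_iff)
  have pr: "L_eigenvalue (\<phi> A) l \<longleftrightarrow> L_eigenvalue A l" if "A \<in> W" for A l
    using pres that unfolding L_spectrum_def by blast
  have keyP: "P A (al (\<phi> A)) \<and> P A (de (\<phi> A))" if A: "A \<in> W" for A
  proof -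
    have AN: "(-1) *\<^sub>R A \<in> W" using cl(2)[OF A] .
    have phN: "\<phi> ((-1) *\<^sub>R A) = (-1) *\<^sub>R \<phi> A" using scale A by blast
    have "P A (al (\<phi> A))"
    proof (cases "ga (\<phi> A) \<ge> 0")
      case True
      hence "L_eigenvalue A (al (\<phi> A))" using L2a pr[OF A] by blast
      thus ?thesis using L1 unfolding P_def by blast
    next
      case False
      hence "ga (\<phi> ((-1) *\<^sub>R A)) \<ge> 0" unfolding phN by simp
      hence "L_eigenvalue (\<phi> ((-1) *\<^sub>R A)) (al (\<phi> ((-1) *\<^sub>R A)))" by (rule L2a)
      hence "L_eigenvalue ((-1) *\<^sub>R A) (- al (\<phi> A))" using pr[OF AN] unfolding phN by simp
      thus ?thesis using L1neg unfolding P_def by blast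
    qed
    moreover have "P A (de (\<phi> A))"
    proof (cases "be (\<phi> A) \<ge> 0")
      case True
      hence "L_eigenvalue A (de (\<phi> A))" using L2b pr[OF A] by blast
      thus ?thesis using L1 unfolding P_def by blast
    next
      case False
      hence "be (\<phi> ((-1) *\<^sub>R A)) \<ge> 0" unfolding phN by simp
      hence "L_eigenvalue (\<phi> ((-1) *\<^sub>R A)) (de (\<phi> ((-1) *\<^sub>R A)))" by (rule L2b)
      hence "L_eigenvalue ((-1) *\<^sub>R A) (- de (\<phi> A))" using pr[OF AN] unfolding phN by simp
      thus ?thesis using L1neg unfolding P_def by blast
    qed
    ultimately show ?thesis by blast
  qed
  obtain a where a: "a = 0 \<or> a = 1" "\<forall>A\<in>W. al (\<phi> A) = a * al A + (1 - a) * de A"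
    using functional_form[of W "\<lambda>A. al (\<phi> A)"] W add scale keyP by auto
  obtain a' where a': "a' = 0 \<or> a' = 1" "\<forall>A\<in>W. de (\<phi> A) = a' * al A + (1 - a') * de A"
    using functional_form[of W "\<lambda>A. de (\<phi> A)"] W add scale keyP by auto
  have inW: "E1 \<in> W" "E2 \<in> W" using W by auto
  have E1s: "L_eigenvalue E1 0" "L_eigenvalue E1 1" using L2a[of E1] L2b[of E1] by auto
  have E2s: "L_eigenvalue E2 0" "L_eigenvalue E2 1" using L2a[of E2] L2b[of E2] by auto
  have ne: "a \<noteq> a'"
  proof
    assume eq: "a = a'"
    show False
    proof (cases "a = 1")
      case True
      hence "al (\<phi> E1) = 1" "de (\<phi> E1) = 1" using a(2) a'(2) inW eq by auto
      thus False using excl E1s pr[OF inW(1)] by blast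
    next
      case False
      hence "a = 0" "a' = 0" using a eq by auto
      hence "al (\<phi> E2) = 1" "de (\<phi> E2) = 1" using a(2) a'(2) inW by auto
      thus False using excl E2s pr[OF inW(2)] by blast
    qed
  qed
  show ?thesis
  proof (cases "a = 1")
    case True
    hence "a' = 0" using ne a' by auto
    thus ?thesis using True a(2) a'(2) unfolding tr_al antitr_al by auto
  next
    case False
    hence "a = 0" "a' = 1" using ne a a' by auto
    thus ?thesis using a(2) a'(2) unfolding tr_al antitr_al by auto
  qed
qed

end
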